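(* Let $G$ be an edge-coloured multigraph, $M$ a rainbow matching of maximum size in $G$, $C_0$ the set of colours not used on $M$, $t$ a positive integer, $N$ a $t$-auxiliary matching for $M$, and $M' \subseteq M$ with $|M'| < t/2 - 1$. Then there is no $(C_0 \cup C_N)$-coloured rainbow matching of size $|M'|+1$ which is vertex-disjoint from the matching $\{v_e x_e : e \in M_N \setminus M'\} \cup (M \setminus (M_N \cup M'))$.
   Context: A rainbow matching is a matching whose edges have pairwise distinct colours; an edge is $C$-coloured if its colour lies in $C$. Let $V$ be the vertex set of $G$. For a rainbow matching $M$ with unused colour set $C_0$, a $t$-auxiliary matching for $M$ is a matching $N$ each of whose edges has one endpoint in $V\setminus V(M)$ and the other in $V(M)$, such that for each edge of $N$ its pair of endpoints is joined by edges of at least $t$ distinct colours from $C_0$, and no two edges of $N$ intersect the same edge of $M$. $M_N \subseteq M$ is the set of edges of $M$ intersecting an edge of $N$; for $e \in M_N$, $x_e$ is the endpoint of $e$ lying in $V(N)$, $m(x_e)$ the other endpoint of $e$, and $v_e$ the vertex matched to $x_e$ in $N$. $C_N$ is the set of colours of the edges of $M_N$. *)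

theory Defs
  imports Complex_Main
begin

text \<open>An edge-coloured multigraph: vertex set V, edge set E (edge identities, so parallel
edges are allowed), endpoint map ends, colour map col.\<close>
definition ec_multigraph :: "'v set \<Rightarrow> 'e set \<Rightarrow> ('e \<Rightarrow> 'v set) \<Rightarrow> bool" where
  "ec_multigraph V E ends \<longleftrightarrow> finite V \<and> finite E \<and>
     (\<forall>e\<in>E. ends e \<subseteq> V \<and> card (ends e) = 2)"

definition verts :: "('e \<Rightarrow> 'v set) \<Rightarrow> 'e set \<Rightarrow> 'v set" where
  "verts ends M = \<Union>(ends ` M)"

definition is_matching :: "('e \<Rightarrow> 'v set) \<Rightarrow> 'e set \<Rightarrow> bool" where
  "is_matching ends M \<longleftrightarrow> (\<forall>e\<in>M. \<forall>f\<in>M. e \<noteq> f \<longrightarrow> ends e \<inter> ends f = {})"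

definition rainbow_matching ::
  "'e set \<Rightarrow> ('e \<Rightarrow> 'v set) \<Rightarrow> ('e \<Rightarrow> 'c) \<Rightarrow> 'e set \<Rightarrow> bool" where
  "rainbow_matching E ends col M \<longleftrightarrow> M \<subseteq> E \<and> is_matching ends M \<and> inj_on col M"

definition max_rainbow_matching ::
  "'e set \<Rightarrow> ('e \<Rightarrow> 'v set) \<Rightarrow> ('e \<Rightarrow> 'c) \<Rightarrow> 'e set \<Rightarrow> bool" where
  "max_rainbow_matching E ends col M \<longleftrightarrow> rainbow_matching E ends col M \<and>
     (\<forall>R. rainbow_matching E ends col R \<longrightarrow> card R \<le> card M)"

definition unused_colours :: "'e set \<Rightarrow> ('e \<Rightarrow> 'c) \<Rightarrow> 'e set \<Rightarrow> 'c set" where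
  "unused_colours E col M = col ` E - col ` M"

definition aux_matching ::
  "'v set \<Rightarrow> 'e set \<Rightarrow> ('e \<Rightarrow> 'v set) \<Rightarrow> ('e \<Rightarrow> 'c) \<Rightarrow> 'e set \<Rightarrow> nat \<Rightarrow> 'v set set \<Rightarrow> bool" where
  "aux_matching V E ends col M t N \<longleftrightarrow>
     (\<forall>p\<in>N. \<exists>v x. p = {v, x} \<and> v \<in> V - verts ends M \<and> x \<in> verts ends M \<and>
        card (col ` {e\<in>E. ends e = {v, x}} \<inter> unused_colours E col M) \<ge> t) \<and>
     (\<forall>p\<in>N. \<forall>q\<in>N. p \<noteq> q \<longrightarrow> p \<inter> q = {}) \<and>
     (\<forall>p\<in>N. \<forall>q\<in>N. \<forall>e\<in>M. p \<noteq> q \<longrightarrow> \<not> (p \<inter> ends e \<noteq> {} \<and> q \<inter> ends e \<noteq> {}))"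

definition M_N :: "('e \<Rightarrow> 'v set) \<Rightarrow> 'e set \<Rightarrow> 'v set set \<Rightarrow> 'e set" where
  "M_N ends M N = {e\<in>M. ends e \<inter> \<Union>N \<noteq> {}}"

definition C_N :: "('e \<Rightarrow> 'v set) \<Rightarrow> ('e \<Rightarrow> 'c) \<Rightarrow> 'e set \<Rightarrow> 'v set set \<Rightarrow> 'c set" where
  "C_N ends col M N = col ` M_N ends M N"

definition N_pairs :: "('e \<Rightarrow> 'v set) \<Rightarrow> 'v set set \<Rightarrow> 'e set \<Rightarrow> 'v set set" where
  "N_pairs ends N S = {p\<in>N. \<exists>e\<in>S. p \<inter> ends e \<noteq> {}}"

end

theory Submission
  imports Defs
begin

lemma sdr:
  assumes "finite S" "\<forall>e\<in>S. finite (A e) \<and> card S \<le> card (A e)"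
  shows "\<exists>g. inj_on g S \<and> (\<forall>e\<in>S. g e \<in> A e)"
  using assms
proof (induction S rule: finite_induct)
  case empty then show ?case by auto
next
  case (insert x S)
  have "\<forall>e\<in>S. finite (A e) \<and> card S \<le> card (A e)"
    using insert by auto
  then obtain g where g: "inj_on g S" "\<forall>e\<in>S. g e \<in> A e" using insert.IH by blast
  have fx: "finite (A x)" and cx: "Suc (card S) \<le> card (A x)" using insert by auto
  have "card (g ` S) \<le> card S" by (rule card_image_le[OF insert.hyps(1)])
  hence lt: "card (g ` S) < card (A x)" using cx by simp
  have "\<not> A x \<subseteq> g ` S"
  proof
    assume "A x \<subseteq> g ` S"
    hence "card (A x) \<le> card (g ` S)" using insert.hyps(1) by (simp add: card_mono)
    thus False using lt by simp
  qed
  then obtain y where y: "y \<in> A x" "y \<notin> g ` S" by blast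
  have "inj_on (g(x := y)) (insert x S)"
    using g(1) y(2) insert.hyps(2) by (auto simp: inj_on_def image_iff)
  moreover have "\<forall>e\<in>insert x S. (g(x := y)) e \<in> A e" using g(2) y(1) by auto
  ultimately show ?case by blast
qed

theorem lemma2p5:
  fixes V :: "'v set" and E :: "'e set" and ends :: "'e \<Rightarrow> 'v set" and col :: "'e \<Rightarrow> 'c"
    and M M' :: "'e set" and N :: "'v set set" and t :: nat
  assumes "ec_multigraph V E ends"
    and "max_rainbow_matching E ends col M"
    and "t > 0"
    and "aux_matching V E ends col M t N"
    and "M' \<subseteq> M"
    and "real (card M') < real t / 2 - 1"
  shows "\<not> (\<exists>R. rainbow_matching E ends col R \<and>
            col ` R \<subseteq> unused_colours E col M \<union> C_N ends col M N \<and>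
            card R = card M' + 1 \<and>
            verts ends R \<inter> (\<Union>(N_pairs ends N (M_N ends M N - M')) \<union>
                             verts ends (M - (M_N ends M N \<union> M'))) = {})"
proof
  assume "\<exists>R. rainbow_matching E ends col R \<and>
            col ` R \<subseteq> unused_colours E col M \<union> C_N ends col M N \<and>
            card R = card M' + 1 \<and>
            verts ends R \<inter> (\<Union>(N_pairs ends N (M_N ends M N - M')) \<union>
                             verts ends (M - (M_N ends M N \<union> M'))) = {}"
  then obtain R where Rr: "rainbow_matching E ends col R"
    and Rc: "col ` R \<subseteq> unused_colours E col M \<union> C_N ends col M N"
    and Rcard: "card R = card M' + 1"
    and Rd: "verts ends R \<inter> (\<Union>(N_pairs ends N (M_N ends M N - M')) \<union>
                             verts ends (M - (M_N ends M N \<union> M'))) = {}"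
    by blast
  define C0 where "C0 = unused_colours E col M"
  define MN where "MN = M_N ends M N"
  define VR where "VR = verts ends R"
  have G: "finite V" "finite E" "\<And>e. e\<in>E \<Longrightarrow> ends e \<subseteq> V \<and> card (ends e) = 2"
    using assms(1) unfolding ec_multigraph_def by auto
  have Mr: "M \<subseteq> E" "is_matching ends M" "inj_on col M"
    and Mmax: "\<And>Q. rainbow_matching E ends col Q \<Longrightarrow> card Q \<le> card M"
    using assms(2) unfolding max_rainbow_matching_def rainbow_matching_def by auto
  have Rr': "R \<subseteq> E" "is_matching ends R" "inj_on col R"
    using Rr unfolding rainbow_matching_def by auto
  have finM: "finite M" using Mr(1) G(2) finite_subset by blast
  have finR: "finite R" using Rr'(1) G(2) finite_subset by blast
  have finM': "finite M'" using assms(5) finM finite_subset by blast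
  have N1: "\<And>p. p\<in>N \<Longrightarrow> \<exists>v x. p = {v, x} \<and> v \<in> V - verts ends M \<and> x \<in> verts ends M \<and>
        t \<le> card (col ` {e\<in>E. ends e = {v, x}} \<inter> C0)"
   and N2: "\<And>p q. p\<in>N \<Longrightarrow> q\<in>N \<Longrightarrow> p \<noteq> q \<Longrightarrow> p \<inter> q = {}"
   and N3: "\<And>p q e. p\<in>N \<Longrightarrow> q\<in>N \<Longrightarrow> e\<in>M \<Longrightarrow> p \<noteq> q \<Longrightarrow> p \<inter> ends e = {} \<or> q \<inter> ends e = {}"
  proof -
    have AUX: "(\<forall>p\<in>N. \<exists>v x. p = {v, x} \<and> v \<in> V - verts ends M \<and> x \<in> verts ends M \<and>
        t \<le> card (col ` {e\<in>E. ends e = {v, x}} \<inter> C0))"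
      "(\<forall>p\<in>N. \<forall>q\<in>N. p \<noteq> q \<longrightarrow> p \<inter> q = {})"
      "(\<forall>p\<in>N. \<forall>q\<in>N. \<forall>e\<in>M. p \<noteq> q \<longrightarrow> \<not> (p \<inter> ends e \<noteq> {} \<and> q \<inter> ends e \<noteq> {}))"
      using assms(4) unfolding aux_matching_def C0_def by simp_all
    show "\<And>p. p\<in>N \<Longrightarrow> \<exists>v x. p = {v, x} \<and> v \<in> V - verts ends M \<and> x \<in> verts ends M \<and>
        t \<le> card (col ` {e\<in>E. ends e = {v, x}} \<inter> C0)" using AUX(1) by (rule bspec)
    show "\<And>p q. p\<in>N \<Longrightarrow> q\<in>N \<Longrightarrow> p \<noteq> q \<Longrightarrow> p \<inter> q = {}" using AUX(2) by blast
    show "\<And>p q e. p\<in>N \<Longrightarrow> q\<in>N \<Longrightarrow> e\<in>M \<Longrightarrow> p \<noteq> q \<Longrightarrow> p \<inter> ends e = {} \<or> q \<inter> ends e = {}"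
      using AUX(3) by blast
  qed
  define r where "r = card R"
  define m' where "m' = card M'"
  have "real (2*m' + 2) < real t" using assms(6) m'_def by simp
  hence "2*m'+2 < t" by (simp only: of_nat_less_iff)
  hence tbig: "2*r + 1 \<le> t" and rm: "r = m' + 1" using Rcard r_def m'_def by auto
  have Mdisj: "\<And>e f. e\<in>M \<Longrightarrow> f\<in>M \<Longrightarrow> e\<noteq>f \<Longrightarrow> ends e \<inter> ends f = {}"
    using Mr(2) unfolding is_matching_def by blast
  have emv: "\<And>e. e\<in>M \<Longrightarrow> ends e \<subseteq> verts ends M" unfolding verts_def by blast
  have erv: "\<And>e. e\<in>R \<Longrightarrow> ends e \<subseteq> VR" unfolding VR_def verts_def by blast
  have ne: "\<And>e. e\<in>E \<Longrightarrow> ends e \<noteq> {}" using G(3) by fastforce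
  have MNM: "MN \<subseteq> M" unfolding MN_def M_N_def by auto
  define pr where "pr e = (SOME p. p \<in> N \<and> p \<inter> ends e \<noteq> {})" for e
  have pr: "pr e \<in> N \<and> pr e \<inter> ends e \<noteq> {}" if "e \<in> MN" for e
  proof -
    have "\<exists>p. p \<in> N \<and> p \<inter> ends e \<noteq> {}" using that unfolding MN_def M_N_def by blast
    thus ?thesis unfolding pr_def by (rule someI_ex)
  qed
  have prM: "pr e \<inter> verts ends M \<subseteq> ends e" if eMN: "e \<in> MN" for e
  proof -
    obtain v x where vx: "pr e = {v, x}" "v \<in> V - verts ends M" "x \<in> verts ends M"
      using N1 pr[OF eMN] by blast
    have "ends e \<subseteq> verts ends M" using emv MNM eMN by blast
    thus ?thesis using vx pr[OF eMN] by auto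
  qed
  have prV: "\<exists>v. v \<in> pr e \<and> v \<notin> verts ends M" if "e \<in> MN" for e
    using N1 pr[OF that] by blast
  have prcard: "t \<le> card (col ` {f\<in>E. ends f = pr e} \<inter> C0)" if eMN: "e \<in> MN" for e
  proof -
    obtain v x where "pr e = {v, x}" "t \<le> card (col ` {e\<in>E. ends e = {v, x}} \<inter> C0)"
      using N1 pr[OF eMN] by blast
    thus ?thesis by simp
  qed
  have prdisj: "pr e \<inter> ends f = {}" if "e \<in> MN" "f \<in> M" "f \<noteq> e" for e f
  proof -
    have "pr e \<inter> ends f \<subseteq> pr e \<inter> verts ends M" using emv that(2) by blast
    also have "\<dots> \<subseteq> ends e" using prM that(1) by blast
    finally show ?thesis using Mdisj[of e f] that MNM by blast
  qed
  have prinj: "pr e \<inter> pr e' = {}" if "e \<in> MN" "e' \<in> MN" "e \<noteq> e'" for e e'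
  proof (cases "pr e = pr e'")
    case True
    thus ?thesis using prdisj[of e e'] pr[OF that(2)] that MNM by auto
  next
    case False
    thus ?thesis using N2 pr that by blast
  qed
  have prR: "pr e \<inter> VR = {}" if "e \<in> MN - M'" for e
  proof -
    have "pr e \<in> N_pairs ends N (MN - M')" unfolding N_pairs_def using pr that by blast
    thus ?thesis using Rd unfolding VR_def MN_def by blast
  qed
  define B where "B = {e\<in>M. ends e \<inter> VR \<noteq> {} \<or> col e \<in> col ` R}"
  have BM: "B \<subseteq> M" unfolding B_def by auto
  have finB: "finite B" using BM finM finite_subset by blast
  have BMN: "B \<subseteq> MN \<union> M'"
  proof
    fix e assume eB: "e \<in> B"
    show "e \<in> MN \<union> M'"
    proof (rule ccontr)
      assume nn: "e \<notin> MN \<union> M'"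
      hence "ends e \<subseteq> verts ends (M - (MN \<union> M'))" using eB BM unfolding verts_def by blast
      hence "ends e \<inter> VR = {}" using Rd unfolding VR_def MN_def by blast
      hence "col e \<in> col ` R" using eB unfolding B_def by blast
      hence "col e \<in> C0 \<union> col ` MN" using Rc unfolding C0_def C_N_def MN_def by blast
      moreover have "col e \<notin> C0" using eB BM unfolding C0_def unused_colours_def by blast
      moreover have "col e \<notin> col ` MN"
      proof
        assume "col e \<in> col ` MN"
        then obtain e' where "e' \<in> MN" "col e' = col e" by auto
        hence "e' = e" using Mr(3) MNM eB BM by (meson inj_onD subsetD)
        thus False using \<open>e' \<in> MN\<close> nn by blast
      qed
      ultimately show False by blast
    qed
  qed
  define X where "X = col ` R \<inter> col ` M"
  define Y where "Y = col ` R - col ` M"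
  have XY: "card X + card Y = r"
  proof -
    have "card (col ` R) = r" using card_image[OF Rr'(3)] r_def by simp
    moreover have "col ` R = X \<union> Y" "X \<inter> Y = {}" unfolding X_def Y_def by auto
    moreover have "finite X" "finite Y" using finR unfolding X_def Y_def by auto
    ultimately show ?thesis using card_Un_disjoint by metis
  qed
  define B1 where "B1 = {e\<in>M. ends e \<inter> VR \<noteq> {}}"
  define B2 where "B2 = {e\<in>M. col e \<in> col ` R}"
  have finVR: "finite VR"
  proof -
    have "VR \<subseteq> V" using G(3) Rr'(1) unfolding VR_def verts_def by blast
    thus ?thesis using G(1) finite_subset by blast
  qed
  have cVR: "card VR \<le> 2 * r"
  proof -
    have "card VR \<le> (\<Sum>f\<in>R. card (ends f))" unfolding VR_def verts_def
      using card_UN_le[OF finR] by blast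
    also have "\<dots> = (\<Sum>f\<in>R. 2)" using G(3) Rr'(1) by (intro sum.cong) auto
    finally show ?thesis using r_def by simp
  qed
  have cB1: "card B1 \<le> 2 * r"
  proof -
    define phi where "phi e = (SOME v. v \<in> ends e \<inter> VR)" for e
    have phi: "phi e \<in> ends e \<inter> VR" if eB1: "e \<in> B1" for e
    proof -
      have "ends e \<inter> VR \<noteq> {}" using eB1 unfolding B1_def by simp
      hence "\<exists>v. v \<in> ends e \<inter> VR" by blast
      thus ?thesis unfolding phi_def by (rule someI_ex)
    qed
    have inj: "inj_on phi B1"
    proof (rule inj_onI)
      fix e f assume ef: "e \<in> B1" "f \<in> B1" "phi e = phi f"
      show "e = f"
      proof (rule ccontr)
        assume "e \<noteq> f"
        moreover have "e \<in> M" "f \<in> M" using ef unfolding B1_def by simp_all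
        ultimately have "ends e \<inter> ends f = {}" using Mdisj by simp
        moreover have "phi e \<in> ends e" "phi f \<in> ends f" using phi ef(1,2) by simp_all
        ultimately show False using ef(3) by auto
      qed
    qed
    have sub: "phi ` B1 \<subseteq> VR" using phi by blast
    have "card B1 \<le> card VR" using card_inj_on_le[OF inj sub finVR] .
    thus ?thesis using cVR by simp
  qed
  have cB2: "card B2 \<le> card X"
  proof -
    have "inj_on col B2" using Mr(3) unfolding B2_def by (rule inj_on_subset) auto
    moreover have "col ` B2 \<subseteq> X" unfolding B2_def X_def by auto
    moreover have "finite X" using finR unfolding X_def by auto
    ultimately show ?thesis by (metis card_inj_on_le)
  qed
  have cB: "card B \<le> 2 * r + card X"
  proof -
    have "B = B1 \<union> B2" unfolding B_def B1_def B2_def by auto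
    hence "card B \<le> card B1 + card B2" by (simp add: card_Un_le)
    thus ?thesis using cB1 cB2 by simp
  qed
  have "card B \<le> card (B \<inter> (MN - M')) + m'"
  proof -
    have "B \<subseteq> (B \<inter> (MN - M')) \<union> M'" using BMN by blast
    hence "card B \<le> card ((B \<inter> (MN - M')) \<union> M')" using finB finM' by (intro card_mono) auto
    also have "\<dots> \<le> card (B \<inter> (MN - M')) + card M'" by (rule card_Un_le)
    finally show ?thesis using m'_def by simp
  qed
  hence "card B - m' \<le> card (B \<inter> (MN - M'))" by simp
  then obtain S where S: "S \<subseteq> B \<inter> (MN - M')" "card S = card B - m'" "finite S"
    by (rule obtain_subset_with_card_n)
  have SMN: "S \<subseteq> MN - M'" and SB: "S \<subseteq> B" using S by auto
  have SM: "S \<subseteq> M" using SMN MNM by auto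
  define A where "A e = (col ` {f\<in>E. ends f = pr e} \<inter> C0) - col ` R" for e
  have Ac: "finite (A e) \<and> card S \<le> card (A e)" if "e \<in> S" for e
  proof -
    define K where "K = col ` {f\<in>E. ends f = pr e} \<inter> C0"
    have finK: "finite K" using G(2) unfolding K_def by auto
    have "K \<inter> col ` M = {}" unfolding K_def C0_def unused_colours_def by auto
    hence AK: "A e = K - Y" unfolding A_def K_def[symmetric] Y_def by auto
    have "t \<le> card K" using prcard SMN that unfolding K_def by blast
    moreover have "card K - card Y \<le> card (K - Y)"
      using finR unfolding Y_def by (intro diff_card_le_card_Diff) auto
    moreover have "card S \<le> r + 1 + card X" using S(2) cB rm by simp
    ultimately have "card S \<le> card (A e)" using AK tbig XY by simp
    thus ?thesis using finK AK by simp
  qed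
  obtain g where g: "inj_on g S" "\<forall>e\<in>S. g e \<in> A e" using sdr[OF S(3)] Ac by blast
  define h where "h e = (SOME f. f \<in> E \<and> ends f = pr e \<and> col f = g e)" for e
  have h: "h e \<in> E \<and> ends (h e) = pr e \<and> col (h e) = g e" if "e \<in> S" for e
  proof -
    have "g e \<in> A e" using g(2) that by blast
    hence "g e \<in> col ` {f\<in>E. ends f = pr e}" unfolding A_def by blast
    then obtain f where "f \<in> {f\<in>E. ends f = pr e}" "g e = col f" by (rule imageE)
    hence "f \<in> E \<and> ends f = pr e \<and> col f = g e" by simp
    hence "\<exists>f. f \<in> E \<and> ends f = pr e \<and> col f = g e" by blast
    thus ?thesis unfolding h_def by (rule someI_ex)
  qed
  have hS: "h e \<in> E" "ends (h e) = pr e" "col (h e) = g e" if "e \<in> S" for e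
    using h[OF that] by simp_all
  have SMN': "e \<in> MN" "e \<notin> M'" "e \<in> M" "e \<in> B" if "e \<in> S" for e
    using that SMN SM SB by auto
  have hinj: "inj_on h S"
  proof (rule inj_onI)
    fix e e' assume ee: "e \<in> S" "e' \<in> S" "h e = h e'"
    show "e = e'"
    proof (rule ccontr)
      assume "e \<noteq> e'"
      hence "pr e \<inter> pr e' = {}" using prinj SMN'(1)[OF ee(1)] SMN'(1)[OF ee(2)] by simp
      moreover have "pr e = pr e'" using hS(2)[OF ee(1)] hS(2)[OF ee(2)] ee(3) by simp
      moreover have "pr e \<noteq> {}" using pr[OF SMN'(1)[OF ee(1)]] by blast
      ultimately show False by simp
    qed
  qed
  define Q where "Q = R \<union> (M - B) \<union> h ` S"
  have D1: "R \<inter> (M - B) = {}"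
  proof (rule ccontr)
    assume "R \<inter> (M - B) \<noteq> {}"
    then obtain f where f: "f \<in> R" "f \<in> M" "f \<notin> B" by blast
    have "ends f \<subseteq> VR" using erv f(1) by simp
    moreover have "ends f \<noteq> {}" using ne Rr'(1) f(1) by blast
    ultimately have "ends f \<inter> VR \<noteq> {}" by blast
    hence "f \<in> B" using f(2) unfolding B_def by simp
    thus False using f(3) by simp
  qed
  have hR: "h e \<notin> R" if "e \<in> S" for e
  proof
    assume "h e \<in> R"
    hence "pr e \<subseteq> VR" using erv hS(2)[OF that] by metis
    moreover have "pr e \<inter> VR = {}" using prR SMN'(1,2)[OF that] by simp
    moreover have "pr e \<noteq> {}" using pr[OF SMN'(1)[OF that]] by blast
    ultimately show False by blast
  qed
  have hM: "h e \<notin> M" if eS: "e \<in> S" for e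
  proof
    assume "h e \<in> M"
    hence "pr e \<subseteq> verts ends M" using emv hS(2)[OF eS] by metis
    moreover obtain v where "v \<in> pr e" "v \<notin> verts ends M" using prV SMN'(1)[OF eS] by blast
    ultimately show False by blast
  qed
  have D2: "(R \<union> (M - B)) \<inter> h ` S = {}" using hR hM by blast
  have finS: "finite (h ` S)" using S(3) by simp
  have cQ: "card Q = r + (card M - card B) + card S"
  proof -
    have "card Q = card (R \<union> (M - B)) + card (h ` S)"
      unfolding Q_def using D2 finR finM finS by (intro card_Un_disjoint) auto
    also have "card (R \<union> (M - B)) = card R + card (M - B)"
      using D1 finR finM by (intro card_Un_disjoint) auto
    also have "card (M - B) = card M - card B" using card_Diff_subset[OF finB BM] .
    also have "card (h ` S) = card S" using card_image[OF hinj] .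
    finally show ?thesis using r_def by simp
  qed
  have "card B \<le> card M" using finM BM card_mono by blast
  hence big: "card Q > card M" using cQ S(2) rm by simp
  have QE: "Q \<subseteq> E" unfolding Q_def using Rr'(1) Mr(1) hS(1) by blast
  have E1: "ends f \<inter> ends e = {}" if "f \<in> R" "e \<in> M - B" for f e
  proof -
    have "ends e \<inter> VR = {}" using that(2) unfolding B_def by simp
    thus ?thesis using erv[OF that(1)] by blast
  qed
  have E2: "ends f \<inter> ends (h e) = {}" if "f \<in> R" "e \<in> S" for f e
  proof -
    have "pr e \<inter> VR = {}" using prR SMN'(1,2)[OF that(2)] by simp
    thus ?thesis using erv[OF that(1)] hS(2)[OF that(2)] by blast
  qed
  have E3: "ends f \<inter> ends (h e) = {}" if "f \<in> M - B" "e \<in> S" for f e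
  proof -
    have "f \<noteq> e" using that SMN'(4)[OF that(2)] by blast
    hence "pr e \<inter> ends f = {}" using prdisj SMN'(1)[OF that(2)] that(1) by blast
    thus ?thesis using hS(2)[OF that(2)] by blast
  qed
  have E4: "ends (h e) \<inter> ends (h e') = {}" if "e \<in> S" "e' \<in> S" "h e \<noteq> h e'" for e e'
  proof -
    have "e \<noteq> e'" using that(3) by blast
    hence "pr e \<inter> pr e' = {}" using prinj SMN'(1)[OF that(1)] SMN'(1)[OF that(2)] by simp
    thus ?thesis using hS(2)[OF that(1)] hS(2)[OF that(2)] by simp
  qed
  have Rm: "\<And>a b. a \<in> R \<Longrightarrow> b \<in> R \<Longrightarrow> a \<noteq> b \<Longrightarrow> ends a \<inter> ends b = {}"
    using Rr'(2) unfolding is_matching_def by blast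
  have match: "is_matching ends Q"
    unfolding is_matching_def
  proof (intro ballI impI)
    fix f1 f2 assume f1: "f1 \<in> Q" and f2: "f2 \<in> Q" and ne12: "f1 \<noteq> f2"
    from f1 consider "f1 \<in> R" | "f1 \<in> M - B" | e1 where "e1 \<in> S" "f1 = h e1" unfolding Q_def by blast
    then show "ends f1 \<inter> ends f2 = {}"
    proof cases
      case 1
      from f2 consider "f2 \<in> R" | "f2 \<in> M - B" | e2 where "e2 \<in> S" "f2 = h e2" unfolding Q_def by blast
      then show ?thesis
      proof cases
        case 1 thus ?thesis using Rm \<open>f1 \<in> R\<close> ne12 by blast
      next
        case 2 thus ?thesis using E1 \<open>f1 \<in> R\<close> by blast
      next
        case 3 thus ?thesis using E2 \<open>f1 \<in> R\<close> by blast
      qed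
    next
      case 2
      from f2 consider "f2 \<in> R" | "f2 \<in> M - B" | e2 where "e2 \<in> S" "f2 = h e2" unfolding Q_def by blast
      then show ?thesis
      proof cases
        case 1 thus ?thesis using E1 \<open>f1 \<in> M - B\<close> by blast
      next
        case 2 thus ?thesis using Mdisj \<open>f1 \<in> M - B\<close> ne12 by blast
      next
        case 3 thus ?thesis using E3 \<open>f1 \<in> M - B\<close> by blast
      qed
    next
      case 3
      from f2 consider "f2 \<in> R" | "f2 \<in> M - B" | e2 where "e2 \<in> S" "f2 = h e2" unfolding Q_def by blast
      then show ?thesis
      proof cases
        case 1 thus ?thesis using E2 3 by blast
      next
        case 2 thus ?thesis using E3 3 by blast
      next
        case c: 3 thus ?thesis using E4 3 ne12 by blast
      qed
    qed
  qed
  have colS: "col (h e) \<notin> col ` R" "col (h e) \<notin> col ` M" if "e \<in> S" for e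
  proof -
    have "g e \<in> A e" using g(2) that by blast
    thus "col (h e) \<notin> col ` R" "col (h e) \<notin> col ` M"
      using hS(3)[OF that] unfolding A_def C0_def unused_colours_def by auto
  qed
  have colMB: "col f \<notin> col ` R" if "f \<in> M - B" for f
    using that unfolding B_def by simp
  have injQ: "inj_on col Q"
  proof (rule inj_onI)
    fix f1 f2 assume f1: "f1 \<in> Q" and f2: "f2 \<in> Q" and c12: "col f1 = col f2"
    from f1 consider "f1 \<in> R" | "f1 \<in> M - B" | e1 where "e1 \<in> S" "f1 = h e1" unfolding Q_def by blast
    then show "f1 = f2"
    proof cases
      case 1
      from f2 consider "f2 \<in> R" | "f2 \<in> M - B" | e2 where "e2 \<in> S" "f2 = h e2" unfolding Q_def by blast
      then show ?thesis
      proof cases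
        case 1 thus ?thesis using Rr'(3) \<open>f1 \<in> R\<close> c12 by (meson inj_onD)
      next
        case 2 thus ?thesis using colMB \<open>f1 \<in> R\<close> c12 by (metis imageI)
      next
        case 3 thus ?thesis using colS \<open>f1 \<in> R\<close> c12 by (metis imageI)
      qed
    next
      case 2
      from f2 consider "f2 \<in> R" | "f2 \<in> M - B" | e2 where "e2 \<in> S" "f2 = h e2" unfolding Q_def by blast
      then show ?thesis
      proof cases
        case 1 thus ?thesis using colMB \<open>f1 \<in> M - B\<close> c12 by (metis imageI)
      next
        case 2 thus ?thesis using Mr(3) \<open>f1 \<in> M - B\<close> c12 by (meson DiffD1 inj_onD)
      next
        case 3 thus ?thesis using colS \<open>f1 \<in> M - B\<close> c12 by (metis DiffD1 imageI)
      qed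
    next
      case 3
      from f2 consider "f2 \<in> R" | "f2 \<in> M - B" | e2 where "e2 \<in> S" "f2 = h e2" unfolding Q_def by blast
      then show ?thesis
      proof cases
        case 1 thus ?thesis using colS 3 c12 by (metis imageI)
      next
        case 2 thus ?thesis using colS 3 c12 by (metis DiffD1 imageI)
      next
        case c: 3
        have "g e1 = g e2" using hS(3) 3 c c12 by metis
        hence "e1 = e2" using g(1) 3 c by (meson inj_onD)
        thus ?thesis using 3 c by simp
      qed
    qed
  qed
  have "rainbow_matching E ends col Q" unfolding rainbow_matching_def using QE match injQ by blast
  hence "card Q \<le> card M" by (rule Mmax)
  thus False using big by simp
qed

end
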